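(* Let $G$ be a group and $(\rho,V)$ a linear representation of $G$ on a finite-dimensional vector space $V$ over a field $k$. Let $Y$ be a $k$-subspace of $V$ and set \[\mu=\inf_{A\in\mathcal{P}_{\mathrm{fin}}(G)\setminus\{\emptyset\}}\frac{\dim(A\cdot Y)}{|A|}.\] Then either $\mu=0$, or for every $\lambda\in[0,\mu]$ there exists a finite subgroup $H$ of $G$ containing $G_Y$ such that \[\dim(A\cdot Y)\geq\lambda|A|+\dim(H\cdot Y)-\lambda|H|\geq\lambda|A|+\dim(Y)-\lambda|H|\] for every nonempty finite subset $A$ of $G$.
   Context: $g\cdot v=\rho(g)v$. For $A\subset G$, $A\cdot Y$ denotes the $k$-subspace spanned by $\{a\cdot v\mid a\in A,v\in Y\}$, and $\dim(A\cdot Y)$ its dimension. $G_Y=\{g\in G\mid g\cdot Y=Y\}$. $\mathcal{P}_{\mathrm{fin}}(G)$ is the set of finite subsets of $G$. *)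

theory Defs
  imports Complex_Main "HOL-Algebra.Group"
begin

definition is_rep :: "('g, 'm) monoid_scheme \<Rightarrow> ('k::field \<Rightarrow> 'v::ab_group_add \<Rightarrow> 'v) \<Rightarrow> ('g \<Rightarrow> 'v \<Rightarrow> 'v) \<Rightarrow> bool" where
  "is_rep G scale \<rho> \<longleftrightarrow>
     (\<forall>g\<in>carrier G. Vector_Spaces.linear scale scale (\<rho> g)) \<and>
     (\<forall>g\<in>carrier G. \<forall>h\<in>carrier G. \<rho> (g \<otimes>\<^bsub>G\<^esub> h) = \<rho> g \<circ> \<rho> h) \<and>
     \<rho> \<one>\<^bsub>G\<^esub> = id"

definition act_span :: "('k::field \<Rightarrow> 'v::ab_group_add \<Rightarrow> 'v) \<Rightarrow> ('g \<Rightarrow> 'v \<Rightarrow> 'v) \<Rightarrow> 'g set \<Rightarrow> 'v set \<Rightarrow> 'v set" where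
  "act_span scale \<rho> A Y = module.span scale {\<rho> a v | a v. a \<in> A \<and> v \<in> Y}"

definition stab :: "('g, 'm) monoid_scheme \<Rightarrow> ('k::field \<Rightarrow> 'v::ab_group_add \<Rightarrow> 'v) \<Rightarrow> ('g \<Rightarrow> 'v \<Rightarrow> 'v) \<Rightarrow> 'v set \<Rightarrow> 'g set" where
  "stab G scale \<rho> Y = {g \<in> carrier G. act_span scale \<rho> {g} Y = Y}"

end

theory Submission
  imports Defs
begin

context finite_dimensional_vector_space
begin

lemma dim_submod: "dim (P \<union> Q) + dim (span P \<inter> span Q) \<le> dim P + dim Q"
proof -
  let ?I = "span P \<inter> span Q"
  obtain C where C: "C \<subseteq> ?I" "independent C" "?I \<subseteq> span C" "card C = dim ?I"
    using basis_exists by blast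
  obtain BP where BP: "C \<subseteq> BP" "BP \<subseteq> span P" "independent BP" "span P \<subseteq> span BP"
    using maximal_independent_subset_extend[of C "span P"] C by auto
  obtain BQ where BQ: "C \<subseteq> BQ" "BQ \<subseteq> span Q" "independent BQ" "span Q \<subseteq> span BQ"
    using maximal_independent_subset_extend[of C "span Q"] C by auto
  have cP: "card BP = dim P" using basis_card_eq_dim[OF BP(2,4,3)] by simp
  have cQ: "card BQ = dim Q" using basis_card_eq_dim[OF BQ(2,4,3)] by simp
  have fP: "finite BP" "finite BQ" using BP(3) BQ(3) finiteI_independent by auto
  have "P \<union> Q \<subseteq> span (BP \<union> BQ)"
    using BP(4) BQ(4) span_superset[of P] span_superset[of Q] span_mono[of BP "BP \<union> BQ"]
      span_mono[of BQ "BP \<union> BQ"] by blast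
  then have "dim (P \<union> Q) \<le> card (BP \<union> BQ)" using dim_le_card fP by auto
  moreover have "card (BP \<union> BQ) + card (BP \<inter> BQ) = card BP + card BQ"
    using card_Un_Int[OF fP] by simp
  moreover have "card C \<le> card (BP \<inter> BQ)" using BP(1) BQ(1) fP by (intro card_mono) auto
  ultimately show ?thesis using cP cQ C(4) by linarith
qed

end


theorem mainTheorem12:
  fixes G :: "('g, 'm) monoid_scheme"
    and scale :: "'k::field \<Rightarrow> 'v::ab_group_add \<Rightarrow> 'v"
    and \<rho> :: "'g \<Rightarrow> 'v \<Rightarrow> 'v"
    and Y :: "'v set"
  assumes "group G"
    and "vector_space scale"
    and "\<exists>B. finite B \<and> module.span scale B = UNIV"
    and "is_rep G scale \<rho>"
    and "module.subspace scale Y"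
  defines "\<mu> \<equiv> Inf {real (vector_space.dim scale (act_span scale \<rho> A Y)) / real (card A) | A.
                     A \<subseteq> carrier G \<and> finite A \<and> A \<noteq> {}}"
  shows "\<mu> = 0 \<or>
    (\<forall>lam\<in>{0..\<mu>}. \<exists>H. subgroup H G \<and> finite H \<and> stab G scale \<rho> Y \<subseteq> H \<and>
       (\<forall>A. A \<subseteq> carrier G \<and> finite A \<and> A \<noteq> {} \<longrightarrow>
          real (vector_space.dim scale (act_span scale \<rho> A Y))
            \<ge> lam * real (card A) + real (vector_space.dim scale (act_span scale \<rho> H Y)) - lam * real (card H)
          \<and> lam * real (card A) + real (vector_space.dim scale (act_span scale \<rho> H Y)) - lam * real (card H)
            \<ge> lam * real (card A) + real (vector_space.dim scale Y) - lam * real (card H)))"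
proof -
  interpret grp: group G by fact
  have rep_lin: "\<And>g. g \<in> carrier G \<Longrightarrow> Vector_Spaces.linear scale scale (\<rho> g)"
    and rep_mult: "\<And>g h. g \<in> carrier G \<Longrightarrow> h \<in> carrier G \<Longrightarrow> \<rho> (g \<otimes>\<^bsub>G\<^esub> h) = \<rho> g \<circ> \<rho> h"
    and rep_one: "\<rho> \<one>\<^bsub>G\<^esub> = id"
    using assms(4) unfolding is_rep_def by auto
  interpret vs: vector_space scale by fact
  obtain B0 where B0: "finite B0" "vs.span B0 = UNIV" using assms(3) by blast
  obtain Bs where Bs: "vs.independent Bs" "UNIV \<subseteq> vs.span Bs"
    using vs.basis_exists[of UNIV] by blast
  have finBs: "finite Bs" using vs.independent_span_bound[of B0 Bs] B0 Bs by auto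
  interpret fd: finite_dimensional_vector_space scale Bs
    by unfold_locales (use Bs finBs in auto)
  interpret fdp: finite_dimensional_vector_space_pair_1 scale Bs scale
    by unfold_locales
  define gens where "gens A = {\<rho> a v | a v. a \<in> A \<and> v \<in> Y}" for A
  define D where "D A = vs.dim (act_span scale \<rho> A Y)" for A
  have D_gens: "D A = vs.dim (gens A)" for A
    unfolding D_def act_span_def gens_def by simp
  have D_le: "D A \<le> card Bs" for A
    unfolding D_def using fd.dim_subset_UNIV fd.dimension_def by simp
  have D_mono: "D A \<le> D B" if "A \<subseteq> B" for A B
  proof -
    have "gens A \<subseteq> gens B" using that unfolding gens_def by blast
    then show ?thesis unfolding D_gens by (rule fd.dim_subset)
  qed
  have D_sub: "D (A \<union> B) + D (A \<inter> B) \<le> D A + D B" for A B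
  proof -
    have u: "gens (A \<union> B) = gens A \<union> gens B" unfolding gens_def by blast
    have "gens (A \<inter> B) \<subseteq> gens A" "gens (A \<inter> B) \<subseteq> gens B" unfolding gens_def by blast+
    then have "gens (A \<inter> B) \<subseteq> vs.span (gens A) \<inter> vs.span (gens B)"
      using vs.span_superset[of "gens A"] vs.span_superset[of "gens B"] by blast
    then have "vs.dim (gens (A \<inter> B)) \<le> vs.dim (vs.span (gens A) \<inter> vs.span (gens B))"
      by (rule fd.dim_subset)
    then show ?thesis using fd.dim_submod[of "gens A" "gens B"] unfolding D_gens u by linarith
  qed
  have D_transl_le: "D ((\<lambda>a. g \<otimes>\<^bsub>G\<^esub> a) ` A) \<le> D A"
    if g: "g \<in> carrier G" and A: "A \<subseteq> carrier G" for g A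
  proof -
    have "gens ((\<lambda>a. g \<otimes>\<^bsub>G\<^esub> a) ` A) = \<rho> g ` gens A"
    proof (intro equalityI subsetI)
      fix x assume "x \<in> gens ((\<lambda>a. g \<otimes>\<^bsub>G\<^esub> a) ` A)"
      then obtain a v where "a \<in> A" "v \<in> Y" "x = \<rho> (g \<otimes>\<^bsub>G\<^esub> a) v" unfolding gens_def by blast
      moreover have "a \<in> carrier G" using \<open>a \<in> A\<close> A by auto
      ultimately have "x = \<rho> g (\<rho> a v)" using rep_mult[OF g, of a] by simp
      then show "x \<in> \<rho> g ` gens A" using \<open>a \<in> A\<close> \<open>v \<in> Y\<close> unfolding gens_def by blast
    next
      fix x assume "x \<in> \<rho> g ` gens A"
      then obtain a v where "a \<in> A" "v \<in> Y" "x = \<rho> g (\<rho> a v)" unfolding gens_def by blast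
      moreover have "a \<in> carrier G" using \<open>a \<in> A\<close> A by auto
      ultimately have "x = \<rho> (g \<otimes>\<^bsub>G\<^esub> a) v" using rep_mult[OF g, of a] by simp
      then show "x \<in> gens ((\<lambda>a. g \<otimes>\<^bsub>G\<^esub> a) ` A)" using \<open>a \<in> A\<close> \<open>v \<in> Y\<close>
        unfolding gens_def by blast
    qed
    then show ?thesis using fdp.dim_image_le[OF rep_lin[OF g], of "gens A"] D_gens by simp
  qed
  have D_transl: "D ((\<lambda>a. g \<otimes>\<^bsub>G\<^esub> a) ` A) = D A"
    if g: "g \<in> carrier G" and A: "A \<subseteq> carrier G" for g A
  proof -
    have A2: "(\<lambda>a. g \<otimes>\<^bsub>G\<^esub> a) ` A \<subseteq> carrier G" using g A by auto
    have "(\<lambda>a. inv\<^bsub>G\<^esub> g \<otimes>\<^bsub>G\<^esub> a) ` ((\<lambda>a. g \<otimes>\<^bsub>G\<^esub> a) ` A) = A"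
      using g A by (force simp: image_image grp.m_assoc[symmetric])
    then have "D A \<le> D ((\<lambda>a. g \<otimes>\<^bsub>G\<^esub> a) ` A)"
      using D_transl_le[OF grp.inv_closed[OF g] A2] by simp
    then show ?thesis using D_transl_le[OF g A] by simp
  qed
  have card_transl: "card ((\<lambda>a. g \<otimes>\<^bsub>G\<^esub> a) ` A) = card A"
    if g: "g \<in> carrier G" and A: "A \<subseteq> carrier G" for g A
  proof (rule card_image, rule inj_onI)
    fix x y assume xy: "x \<in> A" "y \<in> A" "g \<otimes>\<^bsub>G\<^esub> x = g \<otimes>\<^bsub>G\<^esub> y"
    then have "inv\<^bsub>G\<^esub> g \<otimes>\<^bsub>G\<^esub> (g \<otimes>\<^bsub>G\<^esub> x) = inv\<^bsub>G\<^esub> g \<otimes>\<^bsub>G\<^esub> (g \<otimes>\<^bsub>G\<^esub> y)" by simp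
    moreover have "x \<in> carrier G" "y \<in> carrier G" using xy A by auto
    ultimately show "x = y" using g by (simp add: grp.m_assoc[symmetric])
  qed
  define S where "S = {real (D A) / real (card A) | A. A \<subseteq> carrier G \<and> finite A \<and> A \<noteq> {}}"
  have mu: "\<mu> = Inf S" unfolding \<mu>_def S_def D_def by simp
  show ?thesis
  proof (cases "\<mu> = 0")
    case True
    then show ?thesis by simp
  next
    case False
    have Sne: "S \<noteq> {}" unfolding S_def using grp.one_closed by blast
    have Sbdd: "bdd_below S" unfolding S_def bdd_below_def by (auto intro!: exI[of _ 0])
    have "\<mu> \<ge> 0" unfolding mu by (rule cInf_greatest[OF Sne]) (auto simp: S_def)
    hence mupos: "\<mu> > 0" using False by simp
    have mule: "\<mu> * real (card A) \<le> real (D A)"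
      if "A \<subseteq> carrier G" "finite A" "A \<noteq> {}" for A
    proof -
      have "\<mu> \<le> real (D A) / real (card A)" unfolding mu
        by (rule cInf_lower[OF _ Sbdd]) (use that in \<open>auto simp: S_def\<close>)
      moreover have "card A > 0" using that card_gt_0_iff by blast
      ultimately show ?thesis by (simp add: le_divide_eq)
    qed
    have finG: "finite (carrier G)"
    proof (rule ccontr)
      assume inf: "infinite (carrier G)"
      define n where "n = nat \<lceil>real (card Bs) / \<mu>\<rceil> + 1"
      obtain A where A: "A \<subseteq> carrier G" "finite A" "card A = n"
        using infinite_arbitrarily_large[OF inf] by blast
      then have "A \<noteq> {}" using n_def by auto
      moreover have "real (D A) \<le> real (card Bs)" using D_le[of A] by simp
      ultimately have "\<mu> * real n \<le> real (card Bs)" using mule[OF A(1,2)] A(3) by simp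
      moreover have "real (card Bs) / \<mu> < real n" unfolding n_def
        using real_nat_ceiling_ge[of "real (card Bs) / \<mu>"] by linarith
      then have "real (card Bs) < \<mu> * real n" using mupos by (simp add: divide_less_eq mult.commute)
      ultimately show False by linarith
    qed
    show ?thesis
    proof (rule disjI2, intro ballI)
      fix lam assume "lam \<in> {0..\<mu>}"
      hence lam0: "0 \<le> lam" by auto
      define f where "f A = real (D A) - lam * real (card A)" for A
      define Fam where "Fam = {A. A \<subseteq> carrier G \<and> \<one>\<^bsub>G\<^esub> \<in> A}"
      have finFam: "finite Fam"
        by (rule finite_subset[of _ "Pow (carrier G)"]) (use finG in \<open>auto simp: Fam_def\<close>)
      have oneFam: "{\<one>\<^bsub>G\<^esub>} \<in> Fam" unfolding Fam_def by simp
      define m where "m = Min (f ` Fam)"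
      have m_le: "m \<le> f A" if "A \<in> Fam" for A
        unfolding m_def using finFam that by simp
      have m_le2: "m \<le> f A" if A: "A \<subseteq> carrier G" "A \<noteq> {}" for A
      proof -
        obtain a where a: "a \<in> A" using A by blast
        have ac: "a \<in> carrier G" using a A by auto
        let ?K = "(\<lambda>x. inv\<^bsub>G\<^esub> a \<otimes>\<^bsub>G\<^esub> x) ` A"
        have "?K \<in> Fam" unfolding Fam_def using A a ac
          by (auto intro!: image_eqI[of _ _ a])
        moreover have "f ?K = f A" unfolding f_def
          using D_transl[OF grp.inv_closed[OF ac] A(1)] card_transl[OF grp.inv_closed[OF ac] A(1)] by simp
        ultimately show ?thesis using m_le by metis
      qed
      define M where "M = {A \<in> Fam. f A = m}"
      have "m \<in> f ` Fam" unfolding m_def using finFam oneFam by (intro Min_in) auto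
      then have Mne: "M \<noteq> {}" unfolding M_def by auto
      have finM: "finite M" unfolding M_def using finFam by simp
      define c where "c = Max (card ` M)"
      have "c \<in> card ` M" unfolding c_def using finM Mne by (intro Max_in) auto
      then obtain H where HM: "H \<in> M" "card H = c" by auto
      have Hmax: "card K \<le> card H" if "K \<in> M" for K
        unfolding HM(2) c_def using finM that by simp
      have Hc: "H \<subseteq> carrier G" "\<one>\<^bsub>G\<^esub> \<in> H" "f H = m" using HM(1) unfolding M_def Fam_def by auto
      have finH: "finite H" using Hc(1) finG finite_subset by blast
      have absorb: "K \<subseteq> H" if K: "K \<subseteq> carrier G" "f K = m" "K \<inter> H \<noteq> {}" for K
      proof -
        have finK: "finite K" using K(1) finG finite_subset by blast
        have d: "real (D (H \<union> K)) + real (D (H \<inter> K)) \<le> real (D H) + real (D K)"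
          using D_sub[of H K] by (metis of_nat_add of_nat_le_iff)
        have "card (H \<union> K) + card (H \<inter> K) = card H + card K"
          using card_Un_Int[OF finH finK] by simp
        then have "real (card (H \<union> K)) + real (card (H \<inter> K)) = real (card H) + real (card K)"
          by (metis of_nat_add)
        then have e: "lam * real (card (H \<union> K)) + lam * real (card (H \<inter> K)) = lam * real (card H) + lam * real (card K)"
          by (metis distrib_left)
        have "m \<le> f (H \<inter> K)" using m_le2[of "H \<inter> K"] K Hc by auto
        then have le: "f (H \<union> K) \<le> m" using d e K(2) Hc(3) unfolding f_def by linarith
        have UF: "H \<union> K \<in> Fam" using Hc K unfolding Fam_def by auto
        then have "H \<union> K \<in> M" using m_le[OF UF] le unfolding M_def by auto
        then have "card (H \<union> K) \<le> card H" by (rule Hmax)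
        then have "H \<union> K = H" using finH finK
          by (metis card_subset_eq Un_upper1 finite_UnI antisym card_mono)
        then show ?thesis by blast
      qed
      have closed: "a \<otimes>\<^bsub>G\<^esub> b \<in> H" if "a \<in> H" "b \<in> H" for a b
      proof -
        have ac: "a \<in> carrier G" using that Hc by auto
        have "(\<lambda>x. a \<otimes>\<^bsub>G\<^esub> x) ` H \<subseteq> H"
        proof (rule absorb)
          show "(\<lambda>x. a \<otimes>\<^bsub>G\<^esub> x) ` H \<subseteq> carrier G" using ac Hc by auto
          show "f ((\<lambda>x. a \<otimes>\<^bsub>G\<^esub> x) ` H) = m"
            unfolding f_def using D_transl[OF ac Hc(1)] card_transl[OF ac Hc(1)] Hc(3) f_def by simp
          have "a \<otimes>\<^bsub>G\<^esub> \<one>\<^bsub>G\<^esub> \<in> (\<lambda>x. a \<otimes>\<^bsub>G\<^esub> x) ` H" using Hc by auto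
          then show "(\<lambda>x. a \<otimes>\<^bsub>G\<^esub> x) ` H \<inter> H \<noteq> {}" using ac that by auto
        qed
        then show ?thesis using that by auto
      qed
      have invs: "inv\<^bsub>G\<^esub> a \<in> H" if a: "a \<in> H" for a
      proof -
        have ac: "a \<in> carrier G" using that Hc by auto
        have sub: "(\<lambda>x. a \<otimes>\<^bsub>G\<^esub> x) ` H \<subseteq> H" using closed a by auto
        have "(\<lambda>x. a \<otimes>\<^bsub>G\<^esub> x) ` H = H"
          using card_subset_eq[OF finH sub] card_transl[OF ac Hc(1)] by simp
        then obtain x where x: "x \<in> H" "\<one>\<^bsub>G\<^esub> = a \<otimes>\<^bsub>G\<^esub> x" using Hc(2) by force
        have xc: "x \<in> carrier G" using x Hc by auto
        have "inv\<^bsub>G\<^esub> a = inv\<^bsub>G\<^esub> a \<otimes>\<^bsub>G\<^esub> (a \<otimes>\<^bsub>G\<^esub> x)" using ac by (simp add: x(2)[symmetric])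
        also have "\<dots> = x" using ac xc by (simp add: grp.m_assoc[symmetric])
        finally show ?thesis using x by simp
      qed
      have sg: "subgroup H G"
        by (rule grp.subgroupI) (use Hc closed invs in auto)
      have stabH: "stab G scale \<rho> Y \<subseteq> H"
      proof
        fix s assume "s \<in> stab G scale \<rho> Y"
        hence s: "s \<in> carrier G" "act_span scale \<rho> {s} Y = Y" by (auto simp: stab_def)
        have sY: "\<rho> s v \<in> Y" if "v \<in> Y" for v
        proof -
          have "\<rho> s v \<in> vs.span {\<rho> a v | a v. a \<in> {s} \<and> v \<in> Y}"
            using that by (intro vs.span_base) blast
          then show ?thesis using s(2) unfolding act_span_def by simp
        qed
        let ?Hs = "(\<lambda>x. x \<otimes>\<^bsub>G\<^esub> s) ` H"
        let ?K = "H \<union> ?Hs"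
        have "gens ?Hs \<subseteq> gens H"
        proof
          fix y assume "y \<in> gens ?Hs"
          then obtain h v where hv: "h \<in> H" "v \<in> Y" "y = \<rho> (h \<otimes>\<^bsub>G\<^esub> s) v"
            unfolding gens_def by blast
          then have "y = \<rho> h (\<rho> s v)" using rep_mult[of h s] Hc s by auto
          then show "y \<in> gens H" using hv sY unfolding gens_def by blast
        qed
        moreover have "gens ?K = gens H \<union> gens ?Hs" unfolding gens_def by blast
        ultimately have "gens ?K = gens H" by blast
        then have DK: "D ?K = D H" using D_gens by simp
        have finK: "finite ?K" using finH by simp
        have cK: "card H \<le> card ?K" using finK by (intro card_mono) auto
        have "f ?K \<le> f H" unfolding f_def using DK cK lam0
          by (simp add: mult_left_mono)
        moreover have KF: "?K \<in> Fam" using Hc s unfolding Fam_def by auto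
        ultimately have "?K \<in> M" using m_le[OF KF] Hc(3) unfolding M_def by auto
        then have "card ?K \<le> card H" by (rule Hmax)
        then have "?K = H" using finK cK
          by (metis card_subset_eq Un_upper1 antisym)
        then have "\<one>\<^bsub>G\<^esub> \<otimes>\<^bsub>G\<^esub> s \<in> H" using Hc(2) by blast
        then show "s \<in> H" using s by simp
      qed
      show "\<exists>H. subgroup H G \<and> finite H \<and> stab G scale \<rho> Y \<subseteq> H \<and>
       (\<forall>A. A \<subseteq> carrier G \<and> finite A \<and> A \<noteq> {} \<longrightarrow>
          real (vector_space.dim scale (act_span scale \<rho> A Y))
            \<ge> lam * real (card A) + real (vector_space.dim scale (act_span scale \<rho> H Y)) - lam * real (card H)
          \<and> lam * real (card A) + real (vector_space.dim scale (act_span scale \<rho> H Y)) - lam * real (card H)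
            \<ge> lam * real (card A) + real (vector_space.dim scale Y) - lam * real (card H))"
      proof (intro exI[of _ H] conjI allI impI sg finH stabH)
        fix A assume A: "A \<subseteq> carrier G \<and> finite A \<and> A \<noteq> {}"
        have "m \<le> f A" using m_le2 A by auto
        then have 1: "real (D A) \<ge> lam * real (card A) + real (D H) - lam * real (card H)"
          using Hc(3) unfolding f_def by linarith
        have "Y \<subseteq> gens H" unfolding gens_def using Hc(2) rep_one by force
        then have "vs.dim Y \<le> D H" using D_gens fd.dim_subset by metis
        then have 2: "real (D H) \<ge> real (vs.dim Y)" by simp
        show "real (vector_space.dim scale (act_span scale \<rho> A Y))
            \<ge> lam * real (card A) + real (vector_space.dim scale (act_span scale \<rho> H Y)) - lam * real (card H)"
          using 1 unfolding D_def by simp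
        show "lam * real (card A) + real (vector_space.dim scale (act_span scale \<rho> H Y)) - lam * real (card H)
            \<ge> lam * real (card A) + real (vector_space.dim scale Y) - lam * real (card H)"
          using 2 unfolding D_def by simp
      qed
    qed
  qed
qed

end
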